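(* Let $X,Y$ be finite abelian groups and $Q\in M_{X\times Y}(\mathbb T)$ arbitrary. Then for $i,j\in X$ the matrix $\sum_{a\in Y}W_{ia,jb}$ does not depend on $b\in Y$, and there is a $*$-representation $\pi:C(Y\wr_*X)\to M_{X\times Y}(\mathbb C)$ with $$\pi(u_{ab}^{(i)})=\sum_{j\in X}W_{ia,jb},\qquad \pi(v_{ij})=\sum_{a\in Y}W_{ia,jb},$$ such that $\pi_Q=\pi\circ\Phi$, where $\Phi:C(S^+_{X\times Y})\to C(Y\wr_*X)$ is the morphism $u_{ia,jb}\mapsto u^{(i)}_{ab}v_{ij}$.
   Context: Finite abelian groups are written additively. For a finite abelian group $Z\simeq\mathbb Z_{N_1}\times\cdots\times\mathbb Z_{N_s}$, $F_Z=F_{N_1}\otimes\cdots\otimes F_{N_s}$ with $F_n=(e^{2\pi ijk/n})_{j,k\in\mathbb Z_n}$. Let $F=F_X$, $L=F_Y$, $M=|X|$, $N=|Y|$, and $(W_{ia,jb})_{kc,ld}=\frac{1}{MN}\frac{Q_{ic}Q_{jd}}{Q_{id}Q_{jc}}F_{i-j,k-l}L_{a-b,c-d}$. $C(S_Z^+)$ is the universal $C^*$-algebra generated by the entries of a magic matrix indexed by a finite set $Z$ (entries orthogonal projections, rows and columns summing to $1$), with $\Delta(u_{ij})=\sum_ku_{ik}\otimes u_{kj}$; $\pi_Q:C(S^+_{X\times Y})\to M_{X\times Y}(\mathbb C)$ is $u_{ia,jb}\mapsto W_{ia,jb}$. $C(Y)$ is regarded as the quotient of $C(S_Y^+)$ by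 the relations $u_{ab}=u_{cd}$ whenever $a-b=c-d$ (so $u_{ab}$ is the indicator function of $a-b$), and similarly $C(X)$ as a quotient of $C(S_X^+)$ with generators $v_{ij}$. The free wreath product $C(Y\wr_*X)$ is the quotient of the free product $C(Y)^{*X}*C(X)$ (with $u^{(i)}_{ab}$ the generators of the $i$-th copy of $C(Y)$) by the relations $[u^{(i)}_{ab},v_{ij}]=0$, with the Hopf structure making $w_{ia,jb}=u^{(i)}_{ab}v_{ij}$ a magic corepresentation. *)

theory Defs
  imports Complex_Main
begin

text \<open>A finite abelian group is presented by a list of moduli ns = [N_1,...,N_s];
  its elements are lists x of length s with x!k < N_k, with componentwise
  addition modulo N_k.\<close>

definition grp :: "nat list \<Rightarrow> nat list set" where
  "grp ns = {x. length x = length ns \<and> (\<forall>k<length ns. x ! k < ns ! k)}"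

definition grp_add :: "nat list \<Rightarrow> nat list \<Rightarrow> nat list \<Rightarrow> nat list" where
  "grp_add ns x y = map (\<lambda>k. (x ! k + y ! k) mod (ns ! k)) [0..<length ns]"

definition grp_diff :: "nat list \<Rightarrow> nat list \<Rightarrow> nat list \<Rightarrow> nat list" where
  "grp_diff ns x y = map (\<lambda>k. (x ! k + (ns ! k - y ! k)) mod (ns ! k)) [0..<length ns]"

text \<open>Fourier matrix F_Z = F_{N_1} (x) ... (x) F_{N_s}, F_n = (e^{2 pi i jk/n}).\<close>
definition fourier :: "nat list \<Rightarrow> nat list \<Rightarrow> nat list \<Rightarrow> complex" where
  "fourier ns x y = (\<Prod>k<length ns. cis (2 * pi * real (x ! k * y ! k) / real (ns ! k)))"

type_synonym idx = "nat list \<times> nat list"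
type_synonym cmat = "idx \<Rightarrow> idx \<Rightarrow> complex"

definition idxset :: "nat list \<Rightarrow> nat list \<Rightarrow> idx set" where
  "idxset ns ms = grp ns \<times> grp ms"

definition mmult :: "idx set \<Rightarrow> cmat \<Rightarrow> cmat \<Rightarrow> cmat" where
  "mmult I A B = (\<lambda>p q. \<Sum>r\<in>I. A p r * B r q)"

definition mone :: cmat where
  "mone = (\<lambda>p q. if p = q then 1 else 0)"

definition meq :: "idx set \<Rightarrow> cmat \<Rightarrow> cmat \<Rightarrow> bool" where
  "meq I A B \<longleftrightarrow> (\<forall>p\<in>I. \<forall>q\<in>I. A p q = B p q)"

definition is_proj :: "idx set \<Rightarrow> cmat \<Rightarrow> bool" where
  "is_proj I P \<longleftrightarrow> meq I (mmult I P P) P \<and> (\<forall>p\<in>I. \<forall>q\<in>I. cnj (P q p) = P p q)"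

definition magic :: "idx set \<Rightarrow> nat list set \<Rightarrow> (nat list \<Rightarrow> nat list \<Rightarrow> cmat) \<Rightarrow> bool" where
  "magic I Z u \<longleftrightarrow> (\<forall>x\<in>Z. \<forall>y\<in>Z. is_proj I (u x y))
     \<and> (\<forall>x\<in>Z. meq I (\<lambda>p q. \<Sum>y\<in>Z. u x y p q) mone)
     \<and> (\<forall>y\<in>Z. meq I (\<lambda>p q. \<Sum>x\<in>Z. u x y p q) mone)"

text \<open>The data of a *-representation of C(Y wr_* X) on C^{X x Y}: images U i a b of
  u^{(i)}_{ab} and V i j of v_{ij}, satisfying all defining relations (so, by the universal
  property, they define a unique *-representation).\<close>
definition wreath_rep :: "nat list \<Rightarrow> nat list \<Rightarrow>
    (nat list \<Rightarrow> nat list \<Rightarrow> nat list \<Rightarrow> cmat) \<Rightarrow> (nat list \<Rightarrow> nat list \<Rightarrow> cmat) \<Rightarrow> bool" where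
  "wreath_rep ns ms U V \<longleftrightarrow>
     (let I = idxset ns ms; X = grp ns; Y = grp ms in
       (\<forall>i\<in>X. magic I Y (U i)
          \<and> (\<forall>a\<in>Y. \<forall>b\<in>Y. \<forall>c\<in>Y. \<forall>d\<in>Y. grp_diff ms a b = grp_diff ms c d \<longrightarrow> meq I (U i a b) (U i c d)))
     \<and> magic I X V
     \<and> (\<forall>i\<in>X. \<forall>j\<in>X. \<forall>k\<in>X. \<forall>l\<in>X. grp_diff ns i j = grp_diff ns k l \<longrightarrow> meq I (V i j) (V k l))
     \<and> (\<forall>i\<in>X. \<forall>j\<in>X. \<forall>a\<in>Y. \<forall>b\<in>Y. meq I (mmult I (U i a b) (V i j)) (mmult I (V i j) (U i a b))))"

definition Wm :: "nat list \<Rightarrow> nat list \<Rightarrow> (nat list \<Rightarrow> nat list \<Rightarrow> complex) \<Rightarrow>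
    nat list \<Rightarrow> nat list \<Rightarrow> nat list \<Rightarrow> nat list \<Rightarrow> cmat" where
  "Wm ns ms Q i a j b = (\<lambda>(k, c) (l, d).
     1 / (of_nat (card (grp ns)) * of_nat (card (grp ms)))
     * (Q i c * Q j d / (Q i d * Q j c))
     * fourier ns (grp_diff ns i j) (grp_diff ns k l)
     * fourier ms (grp_diff ms a b) (grp_diff ms c d))"

end

theory Submission
  imports Defs
begin


lemma grp_Nil: "grp [] = {[]}" by (auto simp: grp_def)

lemma grp_Cons: "grp (n # ns) = (\<lambda>(h,t). h # t) ` ({..<n} \<times> grp ns)"
proof (rule set_eqI)
  fix x show "x \<in> grp (n # ns) \<longleftrightarrow> x \<in> (\<lambda>(h,t). h # t) ` ({..<n} \<times> grp ns)"
  proof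
    assume "x \<in> grp (n # ns)"
    then obtain h t where x: "x = h # t" and l: "length t = length ns"
      and c: "\<forall>k<Suc (length ns). x ! k < (n#ns) ! k"
      by (cases x) (auto simp: grp_def)
    have "h < n" using c[rule_format, of 0] x by simp
    moreover have "t \<in> grp ns" using l c x by (auto simp: grp_def)
    ultimately show "x \<in> (\<lambda>(h,t). h # t) ` ({..<n} \<times> grp ns)" using x by auto
  next
    assume "x \<in> (\<lambda>(h,t). h # t) ` ({..<n} \<times> grp ns)"
    then show "x \<in> grp (n # ns)" by (auto simp: grp_def less_Suc_eq_0_disj)
  qed
qed

lemma inj_Cons2: "inj_on (\<lambda>(h,t). h # t) A" by (auto simp: inj_on_def)

lemma finite_grp: "finite (grp ns)"
  by (induction ns) (auto simp: grp_Nil grp_Cons)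

lemma card_grp: "card (grp ns) = prod_list ns"
  by (induction ns) (auto simp: grp_Nil grp_Cons card_image inj_Cons2 card_cartesian_product)

lemma sum_grp_Cons: "(\<Sum>z\<in>grp (n # ns). F z) = (\<Sum>h<n. \<Sum>t\<in>grp ns. F (h # t))"
  unfolding grp_Cons sum.reindex[OF inj_Cons2] comp_def sum.cartesian_product by (simp add: split_def)

lemma fourier_Nil: "fourier [] x y = 1" by (simp add: fourier_def)

lemma fourier_Cons: "fourier (n # ns) (x # xs) (k # ks) =
    cis (2 * pi * real (x * k) / real n) * fourier ns xs ks"
  unfolding fourier_def by (simp add: prod.lessThan_Suc_shift del: prod.lessThan_Suc)

lemma norm_fourier: "norm (fourier ns x y) = 1"
  unfolding fourier_def by (simp add: prod_norm[symmetric])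

lemma fourier_nz: "fourier ns x y \<noteq> 0"
  using norm_fourier[of ns x y] by auto

lemma fourier_sym: "fourier ns x y = fourier ns y x"
  unfolding fourier_def by (simp add: mult.commute)

lemma geo1:
  assumes "x < n" "y < n"
  shows "(\<Sum>h<n. cis (2 * pi * (real x * real h) / real n) / cis (2 * pi * (real y * real h) / real n))
     = (if x = y then of_nat n else 0)"
proof -
  have n: "n > 0" using assms by simp
  let ?z = "cis (2 * pi * real x / real n) / cis (2 * pi * real y / real n)"
  have e: "cis (2 * pi * (real x * real h) / real n) / cis (2 * pi * (real y * real h) / real n) = ?z ^ h" for h
    by (simp add: cis_divide DeMoivre field_simps)
  have "?z ^ n = cis (2 * pi * real x) / cis (2 * pi * real y)"
    using n by (simp add: power_divide DeMoivre field_simps)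
  also have "\<dots> = 1" by simp
  finally have zn: "?z ^ n = 1" .
  show ?thesis
  proof (cases "x = y")
    case True then show ?thesis by simp
  next
    case False
    have "cis (2 * pi * real x / real n) \<noteq> cis (2 * pi * real y / real n)"
      using bij_betw_roots_unity[OF n] False assms unfolding bij_betw_def inj_on_def by auto
    then have "?z \<noteq> 1" by (metis cis_neq_zero nonzero_divide_eq_eq mult_1 mult.commute)
    then show ?thesis using False zn by (simp add: e sum_gp_strict)
  qed
qed

lemma fourier_orth:
  assumes "x \<in> grp ns" "y \<in> grp ns"
  shows "(\<Sum>k\<in>grp ns. fourier ns x k / fourier ns y k) = (if x = y then of_nat (card (grp ns)) else 0)"
  using assms
proof (induction ns arbitrary: x y)
  case Nil then show ?case by (simp add: grp_Nil fourier_Nil)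
next
  case (Cons n ns)
  from Cons.prems obtain x0 xs where x: "x = x0 # xs" "x0 < n" "xs \<in> grp ns"
    by (auto simp: grp_Cons)
  from Cons.prems obtain y0 ys where y: "y = y0 # ys" "y0 < n" "ys \<in> grp ns"
    by (auto simp: grp_Cons)
  have "(\<Sum>k\<in>grp (n#ns). fourier (n#ns) x k / fourier (n#ns) y k)
     = (\<Sum>h<n. cis (2 * pi * real (x0 * h) / real n) / cis (2 * pi * real (y0 * h) / real n))
       * (\<Sum>t\<in>grp ns. fourier ns xs t / fourier ns ys t)"
    by (simp add: sum_grp_Cons x y fourier_Cons sum_product)
  also have "\<dots> = (if x = y then of_nat (card (grp (n#ns))) else 0)"
    using x y by (simp add: geo1 Cons.IH card_grp)
  finally show ?case .
qed

lemma cis_factor: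
  assumes n: "0 < n" and l: "l < n"
  shows "cis (2 * pi * (real x * real ((k + (n - l)) mod n)) / real n)
       = cis (2 * pi * (real x * real k) / real n) / cis (2 * pi * (real x * real l) / real n)"
proof -
  define m where "m = k + (n - l)"
  have rm: "real (m mod n) = real k + real n - real l - real n * real (m div n)"
  proof -
    have "m = n * (m div n) + m mod n" by simp
    then have "real m = real n * real (m div n) + real (m mod n)"
      by (metis of_nat_add of_nat_mult)
    moreover have "real m = real k + real n - real l" using l unfolding m_def by simp
    ultimately show ?thesis by simp
  qed
  define z :: int where "z = int x - int x * int (m div n)"
  have th: "2 * pi * (real x * real (m mod n)) / real n
      = (2 * pi * (real x * real k) / real n - 2 * pi * (real x * real l) / real n) + 2 * pi * real_of_int z"
    using n unfolding rm z_def by (simp add: field_simps)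
  have "cis (2 * pi * (real x * real (m mod n)) / real n)
      = cis (2 * pi * (real x * real k) / real n - 2 * pi * (real x * real l) / real n) * cis (2 * pi * real_of_int z)"
    unfolding th cis_mult by simp
  also have "\<dots> = cis (2 * pi * (real x * real k) / real n) / cis (2 * pi * (real x * real l) / real n)"
    by (simp add: cis_divide)
  finally show ?thesis unfolding m_def .
qed

lemma fourier_diff2:
  assumes "\<forall>n\<in>set ns. 0 < n" "k \<in> grp ns" "l \<in> grp ns"
  shows "fourier ns x (grp_diff ns k l) = fourier ns x k / fourier ns x l"
proof -
  have "fourier ns x (grp_diff ns k l)
     = (\<Prod>t<length ns. cis (2 * pi * (real (x!t) * real (k!t)) / real (ns!t))
         / cis (2 * pi * (real (x!t) * real (l!t)) / real (ns!t)))"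
    unfolding fourier_def grp_diff_def
  proof (rule prod.cong[OF refl])
    fix t assume t: "t \<in> {..<length ns}"
    then have "0 < ns ! t" "l ! t < ns ! t" using assms by (auto simp: grp_def)
    then show "cis (2 * pi * real (x ! t * map (\<lambda>k'. (k ! k' + (ns ! k' - l ! k')) mod ns ! k') [0..<length ns] ! t) / real (ns ! t))
      = cis (2 * pi * (real (x!t) * real (k!t)) / real (ns!t)) / cis (2 * pi * (real (x!t) * real (l!t)) / real (ns!t))"
      using t cis_factor[of "ns!t" "l!t" "x!t" "k!t"] by simp
  qed
  also have "\<dots> = fourier ns x k / fourier ns x l"
    unfolding fourier_def by (simp add: prod_dividef)
  finally show ?thesis .
qed

lemma fourier_diff1:
  assumes "\<forall>n\<in>set ns. 0 < n" "i \<in> grp ns" "j \<in> grp ns"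
  shows "fourier ns (grp_diff ns i j) z = fourier ns i z / fourier ns j z"
  using fourier_diff2[OF assms, of z] by (simp add: fourier_sym)




definition Rm :: "'s set \<Rightarrow> ('s \<Rightarrow> idx \<Rightarrow> complex) \<Rightarrow> complex \<Rightarrow> cmat" where
  "Rm S A E = (\<lambda>p q. (\<Sum>s\<in>S. A s p * cnj (A s q)) / E)"

lemma mmult_Rm:
  assumes fin: "finite I" "finite S" "finite T" and E: "E \<noteq> 0"
    and orth: "\<And>s t. s \<in> S \<Longrightarrow> t \<in> T \<Longrightarrow> (\<Sum>r\<in>I. cnj (A s r) * A t r) = (if s = t then E else 0)"
  shows "mmult I (Rm S A E) (Rm T A E) p q = Rm (S \<inter> T) A E p q"
proof -
  have "mmult I (Rm S A E) (Rm T A E) p q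
      = (\<Sum>r\<in>I. \<Sum>s\<in>S. \<Sum>t\<in>T. A s p * cnj (A t q) * (cnj (A s r) * A t r) / (E * E))"
    unfolding mmult_def Rm_def
    by (simp add: sum_distrib_left sum_distrib_right sum_divide_distrib[symmetric] mult_ac)
  also have "\<dots> = (\<Sum>s\<in>S. \<Sum>t\<in>T. \<Sum>r\<in>I. A s p * cnj (A t q) * (cnj (A s r) * A t r) / (E * E))"
    by (simp add: sum.swap[of _ I] sum.swap[of _ I T])
  also have "\<dots> = (\<Sum>s\<in>S. \<Sum>t\<in>T. A s p * cnj (A t q) * (\<Sum>r\<in>I. cnj (A s r) * A t r) / (E * E))"
    by (simp add: sum_distrib_left sum_divide_distrib)
  also have "\<dots> = (\<Sum>s\<in>S. \<Sum>t\<in>T. if s = t then A s p * cnj (A t q) * E / (E * E) else 0)"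
    by (intro sum.cong refl) (simp add: orth)
  also have "\<dots> = (\<Sum>s\<in>S. if s \<in> T then A s p * cnj (A s q) / E else 0)"
    using fin E by (intro sum.cong refl) (simp add: sum.delta)
  also have "\<dots> = (\<Sum>s\<in>S. (if s \<in> T then A s p * cnj (A s q) else 0) / E)"
    by (intro sum.cong refl) auto
  also have "\<dots> = Rm (S \<inter> T) A E p q"
    unfolding Rm_def using fin
    by (simp add: sum.inter_restrict sum_divide_distrib)
  finally show ?thesis .
qed

lemma Rm_herm: "cnj E = E \<Longrightarrow> cnj (Rm S A E q p) = Rm S A E p q"
  unfolding Rm_def by (simp add: mult.commute)

lemma mmult_cong:
  assumes "meq I A A'" "meq I B B'" "p \<in> I" "q \<in> I"
  shows "mmult I A B p q = mmult I A' B' p q"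
  using assms unfolding mmult_def meq_def by (intro sum.cong) auto

lemma meq_mmult_Rm:
  assumes fin: "finite I" "finite S" "finite T" and E: "E \<noteq> 0" and ST: "S \<subseteq> Sa" "T \<subseteq> Sa"
    and orth: "\<And>s t. s \<in> Sa \<Longrightarrow> t \<in> Sa \<Longrightarrow> (\<Sum>r\<in>I. cnj (A s r) * A t r) = (if s = t then E else 0)"
    and P: "meq I P (Rm S A E)" and R: "meq I R (Rm T A E)"
  shows "meq I (mmult I P R) (Rm (S \<inter> T) A E)"
  unfolding meq_def
proof (intro ballI)
  fix p q assume pq: "p \<in> I" "q \<in> I"
  have "mmult I P R p q = mmult I (Rm S A E) (Rm T A E) p q" by (rule mmult_cong[OF P R pq])
  also have "\<dots> = Rm (S \<inter> T) A E p q"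
    by (rule mmult_Rm[OF fin E], rule orth) (use ST in auto)
  finally show "mmult I P R p q = Rm (S \<inter> T) A E p q" .
qed

lemma proj_Rm:
  assumes fin: "finite I" "finite S" and E: "E \<noteq> 0" "cnj E = E"
    and orth: "\<And>s t. s \<in> S \<Longrightarrow> t \<in> S \<Longrightarrow> (\<Sum>r\<in>I. cnj (A s r) * A t r) = (if s = t then E else 0)"
    and P: "meq I P (Rm S A E)"
  shows "is_proj I P"
proof -
  have "meq I (mmult I P P) (Rm (S \<inter> S) A E)"
    by (rule meq_mmult_Rm[OF fin fin(2) E(1) subset_refl subset_refl orth P P])
  then have 1: "meq I (mmult I P P) P" using P by (simp add: meq_def)
  have 2: "\<forall>p\<in>I. \<forall>q\<in>I. cnj (P q p) = P p q"
  proof (intro ballI)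
    fix p q assume pq: "p \<in> I" "q \<in> I"
    then have "P q p = Rm S A E q p" "P p q = Rm S A E p q" using P by (auto simp: meq_def)
    then show "cnj (P q p) = P p q" by (simp add: Rm_herm E)
  qed
  show ?thesis using 1 2 unfolding is_proj_def by blast
qed

lemma sum_single_times: "(\<Sum>s\<in>{a} \<times> B. h s) = (\<Sum>j\<in>B. h (a, j))"
proof -
  have "(\<Sum>s\<in>{a} \<times> B. h s) = (\<Sum>(x,y)\<in>{a} \<times> B. h (x,y))" by simp
  also have "\<dots> = (\<Sum>x\<in>{a}. \<Sum>y\<in>B. h (x,y))" by (rule sum.cartesian_product[symmetric])
  finally show ?thesis by simp
qed

lemma sum_times_single: "(\<Sum>s\<in>B \<times> {j}. h s) = (\<Sum>a\<in>B. h (a, j))"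
proof -
  have "(\<Sum>s\<in>B \<times> {j}. h s) = (\<Sum>(x,y)\<in>B \<times> {j}. h (x,y))" by simp
  also have "\<dots> = (\<Sum>x\<in>B. \<Sum>y\<in>{j}. h (x,y))" by (rule sum.cartesian_product[symmetric])
  finally show ?thesis by simp
qed




definition alpha :: "nat list \<Rightarrow> nat list \<Rightarrow> (nat list \<Rightarrow> nat list \<Rightarrow> complex) \<Rightarrow>
    nat list \<Rightarrow> nat list \<Rightarrow> nat list \<Rightarrow> nat list \<Rightarrow> idx \<Rightarrow> complex" where
  "alpha ns ms Q i a j b = (\<lambda>(k,c). Q i c / Q j c * (fourier ns i k / fourier ns j k)
       * (fourier ms a c / fourier ms b c))"

definition Vf :: "nat list \<Rightarrow> nat list \<Rightarrow> nat list \<Rightarrow> nat list \<Rightarrow> cmat" where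
  "Vf ns ms i j = (\<lambda>(k,c) (l,d). if c = d then
      fourier ns (grp_diff ns i j) (grp_diff ns k l) / of_nat (card (grp ns)) else 0)"

lemma unit_cnj: "norm (z::complex) = 1 \<Longrightarrow> cnj z = 1 / z"
proof -
  assume "norm z = 1"
  then have "z * cnj z = 1" using complex_norm_square[of z] by simp
  then show ?thesis by (metis divide_eq_eq mult.commute mult_zero_left zero_neq_one)
qed

lemma prod_list_pos: "\<forall>n\<in>set ns. 0 < n \<Longrightarrow> 0 < prod_list (ns::nat list)"
  by (induction ns) auto

lemma fourier_orth2:
  assumes "x \<in> grp ns" "y \<in> grp ns"
  shows "(\<Sum>k\<in>grp ns. fourier ns k x / fourier ns k y) = (if x = y then of_nat (card (grp ns)) else 0)"
  using fourier_orth[OF assms] by (simp add: fourier_sym)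

lemma F_expand:
  assumes "\<forall>n\<in>set ns. 0 < n" "i \<in> grp ns" "j \<in> grp ns" "k \<in> grp ns" "l \<in> grp ns"
  shows "fourier ns (grp_diff ns i j) (grp_diff ns k l)
       = (fourier ns i k / fourier ns i l) * (fourier ns j l / fourier ns j k)"
  using assms by (simp add: fourier_diff2 fourier_diff1 fourier_nz field_simps)

context
  fixes ns ms :: "nat list" and Q :: "nat list \<Rightarrow> nat list \<Rightarrow> complex"
  assumes pns: "\<forall>n\<in>set ns. 0 < n" and pms: "\<forall>m\<in>set ms. 0 < m"
    and uQ: "\<forall>i\<in>grp ns. \<forall>c\<in>grp ms. cmod (Q i c) = 1"
begin

lemma Q_nz: "i \<in> grp ns \<Longrightarrow> c \<in> grp ms \<Longrightarrow> Q i c \<noteq> 0"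
  using uQ by fastforce

lemma cardX: "card (grp ns) > 0" using prod_list_pos[OF pns] by (simp add: card_grp)
lemma cardY: "card (grp ms) > 0" using prod_list_pos[OF pms] by (simp add: card_grp)

lemma E_nz: "(of_nat (card (grp ns)) * of_nat (card (grp ms)) :: complex) \<noteq> 0"
  using cardX cardY by simp

lemma norm_alpha:
  assumes "i \<in> grp ns" "j \<in> grp ns" "a \<in> grp ms" "b \<in> grp ms" "k \<in> grp ns" "c \<in> grp ms"
  shows "norm (alpha ns ms Q i a j b (k, c)) = 1"
  using assms uQ by (simp add: alpha_def norm_mult norm_divide norm_fourier)

lemma cnj_alpha:
  assumes "i \<in> grp ns" "j \<in> grp ns" "a \<in> grp ms" "b \<in> grp ms" "k \<in> grp ns" "c \<in> grp ms"
  shows "cnj (alpha ns ms Q i a j b (k, c)) = 1 / alpha ns ms Q i a j b (k, c)"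
  by (rule unit_cnj[OF norm_alpha[OF assms]])

lemma WA:
  assumes "i \<in> grp ns" "j \<in> grp ns" "a \<in> grp ms" "b \<in> grp ms"
    "k \<in> grp ns" "c \<in> grp ms" "l \<in> grp ns" "d \<in> grp ms"
  shows "Wm ns ms Q i a j b (k, c) (l, d)
       = alpha ns ms Q i a j b (k, c) * cnj (alpha ns ms Q i a j b (l, d))
         / (of_nat (card (grp ns)) * of_nat (card (grp ms)))"
proof -
  have e: "cnj (alpha ns ms Q i a j b (l, d)) = 1 / alpha ns ms Q i a j b (l, d)"
    by (rule cnj_alpha) (use assms in auto)
  show ?thesis unfolding e using assms
    by (simp add: Wm_def alpha_def F_expand[OF pns] F_expand[OF pms]
        fourier_nz Q_nz field_simps)
qed

lemma OL:
  assumes i: "i \<in> grp ns" and b: "b \<in> grp ms"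
    and s: "s \<in> grp ms \<times> grp ns" and t: "t \<in> grp ms \<times> grp ns"
  shows "(\<Sum>r\<in>idxset ns ms. cnj (alpha ns ms Q i (fst s) (snd s) b r) * alpha ns ms Q i (fst t) (snd t) b r)
     = (if s = t then of_nat (card (grp ns)) * of_nat (card (grp ms)) else 0)"
proof -
  obtain a j where s': "s = (a, j)" "a \<in> grp ms" "j \<in> grp ns" using s by auto
  obtain a' j' where t': "t = (a', j')" "a' \<in> grp ms" "j' \<in> grp ns" using t by auto
  let ?G = "\<lambda>c. Q j c / Q j' c * (fourier ms a' c / fourier ms a c)"
  let ?H = "\<lambda>k. fourier ns j k / fourier ns j' k"
  have pt: "cnj (alpha ns ms Q i a j b (k, c)) * alpha ns ms Q i a' j' b (k, c) = ?G c * ?H k"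
    if "k \<in> grp ns" "c \<in> grp ms" for k c
  proof -
    have e: "cnj (alpha ns ms Q i a j b (k, c)) = 1 / alpha ns ms Q i a j b (k, c)"
      by (rule cnj_alpha) (use that i b s' in auto)
    show ?thesis unfolding e using that i b s' t'
      by (simp add: alpha_def fourier_nz Q_nz field_simps)
  qed
  have "(\<Sum>r\<in>idxset ns ms. cnj (alpha ns ms Q i (fst s) (snd s) b r) * alpha ns ms Q i (fst t) (snd t) b r)
      = (\<Sum>(k,c)\<in>grp ns \<times> grp ms. ?G c * ?H k)"
    unfolding idxset_def s' t' by (intro sum.cong refl) (auto simp: pt)
  also have "\<dots> = (\<Sum>k\<in>grp ns. \<Sum>c\<in>grp ms. ?G c * ?H k)"
    by (rule sum.cartesian_product[symmetric])
  also have "\<dots> = (\<Sum>c\<in>grp ms. ?G c * (\<Sum>k\<in>grp ns. ?H k))"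
    by (subst sum.swap) (simp add: sum_distrib_left)
  also have "\<dots> = (\<Sum>c\<in>grp ms. ?G c * (if j = j' then of_nat (card (grp ns)) else 0))"
    using fourier_orth[OF s'(3) t'(3)] by simp
  also have "\<dots> = (if s = t then of_nat (card (grp ns)) * of_nat (card (grp ms)) else 0)"
  proof (cases "j = j'")
    case False then show ?thesis using s' t' by simp
  next
    case True
    have "(\<Sum>c\<in>grp ms. ?G c * of_nat (card (grp ns)))
        = (\<Sum>c\<in>grp ms. fourier ms a' c / fourier ms a c) * of_nat (card (grp ns))"
      unfolding sum_distrib_right using True s' t'
      by (intro sum.cong refl) (simp add: Q_nz)
    also have "\<dots> = (if s = t then of_nat (card (grp ns)) * of_nat (card (grp ms)) else 0)"
      using fourier_orth[OF t'(2) s'(2)] True s' t' by auto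
    finally show ?thesis using True by simp
  qed
  finally show ?thesis .
qed

lemma Wm_split:
  assumes "a \<in> grp ms" "b \<in> grp ms" "c \<in> grp ms" "d \<in> grp ms"
  shows "Wm ns ms Q i a j b (k, c) (l, d)
     = (Q i c * Q j d / (Q i d * Q j c)) * fourier ns (grp_diff ns i j) (grp_diff ns k l)
       / (of_nat (card (grp ns)) * of_nat (card (grp ms)))
       * (fourier ms a c / fourier ms a d) * (fourier ms b d / fourier ms b c)"
  using assms by (simp add: Wm_def F_expand[OF pms] mult_ac)

lemma CF_a:
  assumes "i \<in> grp ns" "j \<in> grp ns" "b \<in> grp ms" "k \<in> grp ns" "l \<in> grp ns" "c \<in> grp ms" "d \<in> grp ms"
  shows "(\<Sum>a\<in>grp ms. Wm ns ms Q i a j b (k, c) (l, d)) = Vf ns ms i j (k, c) (l, d)"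
proof -
  let ?K = "(Q i c * Q j d / (Q i d * Q j c)) * fourier ns (grp_diff ns i j) (grp_diff ns k l)
       / (of_nat (card (grp ns)) * of_nat (card (grp ms))) * (fourier ms b d / fourier ms b c)"
  have "(\<Sum>a\<in>grp ms. Wm ns ms Q i a j b (k, c) (l, d)) = (\<Sum>a\<in>grp ms. ?K * (fourier ms a c / fourier ms a d))"
    using assms by (intro sum.cong refl) (simp add: Wm_split mult_ac)
  also have "\<dots> = ?K * (\<Sum>a\<in>grp ms. fourier ms a c / fourier ms a d)"
    by (simp only: sum_distrib_left)
  also have "\<dots> = ?K * (if c = d then of_nat (card (grp ms)) else 0)"
    using fourier_orth2[of c ms d] assms by simp
  also have "\<dots> = Vf ns ms i j (k, c) (l, d)"
    using assms cardY by (simp add: Vf_def Q_nz fourier_nz)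
  finally show ?thesis .
qed

lemma CF_b:
  assumes "i \<in> grp ns" "j \<in> grp ns" "a \<in> grp ms" "k \<in> grp ns" "l \<in> grp ns" "c \<in> grp ms" "d \<in> grp ms"
  shows "(\<Sum>b\<in>grp ms. Wm ns ms Q i a j b (k, c) (l, d)) = Vf ns ms i j (k, c) (l, d)"
proof -
  let ?K = "(Q i c * Q j d / (Q i d * Q j c)) * fourier ns (grp_diff ns i j) (grp_diff ns k l)
       / (of_nat (card (grp ns)) * of_nat (card (grp ms))) * (fourier ms a c / fourier ms a d)"
  have "(\<Sum>b\<in>grp ms. Wm ns ms Q i a j b (k, c) (l, d)) = (\<Sum>b\<in>grp ms. ?K * (fourier ms b d / fourier ms b c))"
    using assms by (intro sum.cong refl) (simp add: Wm_split mult_ac)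
  also have "\<dots> = ?K * (\<Sum>b\<in>grp ms. fourier ms b d / fourier ms b c)"
    by (simp only: sum_distrib_left)
  also have "\<dots> = ?K * (if d = c then of_nat (card (grp ms)) else 0)"
    using fourier_orth2[of d ms c] assms by simp
  also have "\<dots> = Vf ns ms i j (k, c) (l, d)"
    using assms cardY by (auto simp: Vf_def Q_nz fourier_nz)
  finally show ?thesis .
qed

lemma VS1:
  assumes "i \<in> grp ns" "k \<in> grp ns" "l \<in> grp ns" "c \<in> grp ms" "d \<in> grp ms"
  shows "(\<Sum>j\<in>grp ns. Vf ns ms i j (k, c) (l, d)) = mone (k, c) (l, d)"
proof (cases "c = d")
  case False then show ?thesis by (simp add: Vf_def mone_def)
next
  case True
  have "(\<Sum>j\<in>grp ns. Vf ns ms i j (k, c) (l, d))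
      = (fourier ns i k / fourier ns i l) * (\<Sum>j\<in>grp ns. fourier ns j l / fourier ns j k) / of_nat (card (grp ns))"
    using assms True by (simp add: Vf_def F_expand[OF pns] sum_distrib_left sum_divide_distrib)
  also have "\<dots> = mone (k, c) (l, d)"
    using assms True cardX by (simp add: fourier_orth2 mone_def fourier_nz)
  finally show ?thesis .
qed

lemma VS2:
  assumes "j \<in> grp ns" "k \<in> grp ns" "l \<in> grp ns" "c \<in> grp ms" "d \<in> grp ms"
  shows "(\<Sum>i\<in>grp ns. Vf ns ms i j (k, c) (l, d)) = mone (k, c) (l, d)"
proof (cases "c = d")
  case False then show ?thesis by (simp add: Vf_def mone_def)
next
  case True
  have "(\<Sum>i\<in>grp ns. Vf ns ms i j (k, c) (l, d))
      = (fourier ns j l / fourier ns j k) * (\<Sum>i\<in>grp ns. fourier ns i k / fourier ns i l) / of_nat (card (grp ns))"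
    using assms True by (simp add: Vf_def F_expand[OF pns] sum_distrib_left sum_divide_distrib mult.commute)
  also have "\<dots> = mone (k, c) (l, d)"
    using assms True cardX by (simp add: fourier_orth2 mone_def fourier_nz)
  finally show ?thesis .
qed

lemma meq_pairI:
  assumes "\<And>k c l d. k \<in> grp ns \<Longrightarrow> c \<in> grp ms \<Longrightarrow> l \<in> grp ns \<Longrightarrow> d \<in> grp ms \<Longrightarrow> A (k, c) (l, d) = B (k, c) (l, d)"
  shows "meq (idxset ns ms) A B"
  unfolding meq_def idxset_def using assms by auto

lemma WR:
  assumes "i \<in> grp ns" "j \<in> grp ns" "a \<in> grp ms" "b \<in> grp ms"
  shows "meq (idxset ns ms) (Wm ns ms Q i a j b)
     (Rm {(a, j)} (\<lambda>s. alpha ns ms Q i (fst s) (snd s) b) (of_nat (card (grp ns)) * of_nat (card (grp ms))))"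
  by (rule meq_pairI) (simp add: Rm_def WA assms)

lemma UR:
  assumes "i \<in> grp ns" "a \<in> grp ms" "b \<in> grp ms"
  shows "meq (idxset ns ms) (\<lambda>p q. \<Sum>j\<in>grp ns. Wm ns ms Q i a j b p q)
     (Rm ({a} \<times> grp ns) (\<lambda>s. alpha ns ms Q i (fst s) (snd s) b) (of_nat (card (grp ns)) * of_nat (card (grp ms))))"
  by (rule meq_pairI) (simp add: Rm_def WA assms sum_single_times sum_divide_distrib)

lemma VR:
  assumes "i \<in> grp ns" "j \<in> grp ns" "b \<in> grp ms"
  shows "meq (idxset ns ms) (Vf ns ms i j)
     (Rm (grp ms \<times> {j}) (\<lambda>s. alpha ns ms Q i (fst s) (snd s) b) (of_nat (card (grp ns)) * of_nat (card (grp ms))))"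
proof (rule meq_pairI)
  fix k c l d assume h: "k \<in> grp ns" "c \<in> grp ms" "l \<in> grp ns" "d \<in> grp ms"
  have "Vf ns ms i j (k, c) (l, d) = (\<Sum>a\<in>grp ms. Wm ns ms Q i a j b (k, c) (l, d))"
    using CF_a[OF assms(1,2,3) h(1,3,2,4)] by simp
  also have "\<dots> = Rm (grp ms \<times> {j}) (\<lambda>s. alpha ns ms Q i (fst s) (snd s) b) (of_nat (card (grp ns)) * of_nat (card (grp ms))) (k, c) (l, d)"
    using assms h by (simp add: Rm_def WA sum_times_single sum_divide_distrib)
  finally show "Vf ns ms i j (k, c) (l, d) = Rm (grp ms \<times> {j}) (\<lambda>s. alpha ns ms Q i (fst s) (snd s) b) (of_nat (card (grp ns)) * of_nat (card (grp ms))) (k, c) (l, d)" .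
qed

end




theorem proposition3p6:
  fixes ns ms :: "nat list" and Q :: "nat list \<Rightarrow> nat list \<Rightarrow> complex"
  assumes "\<forall>n\<in>set ns. 0 < n" and "\<forall>m\<in>set ms. 0 < m"
    and "\<forall>i\<in>grp ns. \<forall>c\<in>grp ms. cmod (Q i c) = 1"
  shows "(\<forall>i\<in>grp ns. \<forall>j\<in>grp ns. \<forall>b\<in>grp ms. \<forall>b'\<in>grp ms.
            meq (idxset ns ms) (\<lambda>p q. \<Sum>a\<in>grp ms. Wm ns ms Q i a j b p q)
                               (\<lambda>p q. \<Sum>a\<in>grp ms. Wm ns ms Q i a j b' p q))
       \<and> (\<exists>U V. wreath_rep ns ms U V
            \<and> (\<forall>i\<in>grp ns. \<forall>a\<in>grp ms. \<forall>b\<in>grp ms.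
                 meq (idxset ns ms) (U i a b) (\<lambda>p q. \<Sum>j\<in>grp ns. Wm ns ms Q i a j b p q))
            \<and> (\<forall>i\<in>grp ns. \<forall>j\<in>grp ns. \<forall>b\<in>grp ms.
                 meq (idxset ns ms) (V i j) (\<lambda>p q. \<Sum>a\<in>grp ms. Wm ns ms Q i a j b p q))
            \<and> (\<forall>i\<in>grp ns. \<forall>j\<in>grp ns. \<forall>a\<in>grp ms. \<forall>b\<in>grp ms.
                 meq (idxset ns ms) (Wm ns ms Q i a j b) (mmult (idxset ns ms) (U i a b) (V i j))))"
proof -
  note pns = assms(1) and pms = assms(2) and uQ = assms(3)
  define U where "U = (\<lambda>i a b p q. \<Sum>j\<in>grp ns. Wm ns ms Q i a j b p q)"
  define V where "V = Vf ns ms"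
  let ?I = "idxset ns ms"
  let ?E = "(of_nat (card (grp ns)) * of_nat (card (grp ms)) :: complex)"
  let ?A = "\<lambda>i b s. alpha ns ms Q i (fst s) (snd s) b"
  have finI: "finite ?I" by (simp add: idxset_def finite_grp)
  have fX: "finite (grp ns)" and fY: "finite (grp ms)" by (simp_all add: finite_grp)
  have E: "?E \<noteq> 0" "cnj ?E = ?E" using E_nz[OF pns pms uQ] by simp_all
  have orth: "\<And>s t. s \<in> grp ms \<times> grp ns \<Longrightarrow> t \<in> grp ms \<times> grp ns \<Longrightarrow>
      (\<Sum>r\<in>?I. cnj (?A i b s r) * ?A i b t r) = (if s = t then ?E else 0)"
    if "i \<in> grp ns" "b \<in> grp ms" for i b
    using OL[OF pns pms uQ that] by blast
  have b0: "replicate (length ms) 0 \<in> grp ms"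
    using pms by (auto simp: grp_def)
  have VW: "meq ?I (V i j) (\<lambda>p q. \<Sum>a\<in>grp ms. Wm ns ms Q i a j b p q)"
    if "i \<in> grp ns" "j \<in> grp ns" "b \<in> grp ms" for i j b
    by (rule meq_pairI[OF pns pms uQ]) (simp add: V_def CF_a[OF pns pms uQ] that)
  have part1: "\<forall>i\<in>grp ns. \<forall>j\<in>grp ns. \<forall>b\<in>grp ms. \<forall>b'\<in>grp ms.
            meq ?I (\<lambda>p q. \<Sum>a\<in>grp ms. Wm ns ms Q i a j b p q)
                   (\<lambda>p q. \<Sum>a\<in>grp ms. Wm ns ms Q i a j b' p q)"
    by (intro ballI, rule meq_pairI[OF pns pms uQ]) (simp add: CF_a[OF pns pms uQ])
  have UR': "meq ?I (U i a b) (Rm ({a} \<times> grp ns) (?A i b) ?E)"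
    if "i \<in> grp ns" "a \<in> grp ms" "b \<in> grp ms" for i a b
    unfolding U_def by (rule UR[OF pns pms uQ that])
  have VR': "meq ?I (V i j) (Rm (grp ms \<times> {j}) (?A i b) ?E)"
    if "i \<in> grp ns" "j \<in> grp ns" "b \<in> grp ms" for i j b
    unfolding V_def by (rule VR[OF pns pms uQ that])
  have Uproj: "is_proj ?I (U i a b)" if "i \<in> grp ns" "a \<in> grp ms" "b \<in> grp ms" for i a b
    by (rule proj_Rm[OF finI _ E orth[OF that(1,3)] UR'[OF that]]) (use fX that in auto)
  have Vproj: "is_proj ?I (V i j)" if "i \<in> grp ns" "j \<in> grp ns" for i j
    by (rule proj_Rm[OF finI _ E orth[OF that(1) b0] VR'[OF that b0]]) (use fY that in auto)
  have Urow: "meq ?I (\<lambda>p q. \<Sum>y\<in>grp ms. U i x y p q) mone" if "i \<in> grp ns" "x \<in> grp ms" for i x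
  proof (rule meq_pairI[OF pns pms uQ])
    fix k c l d assume h: "k \<in> grp ns" "c \<in> grp ms" "l \<in> grp ns" "d \<in> grp ms"
    have "(\<Sum>y\<in>grp ms. U i x y (k, c) (l, d)) = (\<Sum>j\<in>grp ns. \<Sum>y\<in>grp ms. Wm ns ms Q i x j y (k, c) (l, d))"
      unfolding U_def by (rule sum.swap)
    also have "\<dots> = (\<Sum>j\<in>grp ns. Vf ns ms i j (k, c) (l, d))"
      using that h by (intro sum.cong refl) (simp add: CF_b[OF pns pms uQ])
    also have "\<dots> = mone (k, c) (l, d)" using that h by (simp add: VS1[OF pns pms uQ])
    finally show "(\<Sum>y\<in>grp ms. U i x y (k, c) (l, d)) = mone (k, c) (l, d)" .
  qed
  have Ucol: "meq ?I (\<lambda>p q. \<Sum>x\<in>grp ms. U i x y p q) mone" if "i \<in> grp ns" "y \<in> grp ms" for i y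
  proof (rule meq_pairI[OF pns pms uQ])
    fix k c l d assume h: "k \<in> grp ns" "c \<in> grp ms" "l \<in> grp ns" "d \<in> grp ms"
    have "(\<Sum>x\<in>grp ms. U i x y (k, c) (l, d)) = (\<Sum>j\<in>grp ns. \<Sum>x\<in>grp ms. Wm ns ms Q i x j y (k, c) (l, d))"
      unfolding U_def by (rule sum.swap)
    also have "\<dots> = (\<Sum>j\<in>grp ns. Vf ns ms i j (k, c) (l, d))"
      using that h by (intro sum.cong refl) (simp add: CF_a[OF pns pms uQ])
    also have "\<dots> = mone (k, c) (l, d)" using that h by (simp add: VS1[OF pns pms uQ])
    finally show "(\<Sum>x\<in>grp ms. U i x y (k, c) (l, d)) = mone (k, c) (l, d)" .
  qed
  have Vrow: "meq ?I (\<lambda>p q. \<Sum>j\<in>grp ns. V i j p q) mone" if "i \<in> grp ns" for i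
    by (rule meq_pairI[OF pns pms uQ]) (simp add: V_def VS1[OF pns pms uQ] that)
  have Vcol: "meq ?I (\<lambda>p q. \<Sum>i\<in>grp ns. V i j p q) mone" if "j \<in> grp ns" for j
    by (rule meq_pairI[OF pns pms uQ]) (simp add: V_def VS2[OF pns pms uQ] that)
  have Udep: "meq ?I (U i a b) (U i c d)" if "grp_diff ms a b = grp_diff ms c d" for i a b c d
  proof -
    have "Wm ns ms Q i a j b = Wm ns ms Q i c j d" for j
      unfolding Wm_def using that by simp
    then show ?thesis unfolding U_def meq_def by simp
  qed
  have Vdep: "meq ?I (V i j) (V k l)" if "grp_diff ns i j = grp_diff ns k l" for i j k l
    unfolding V_def Vf_def meq_def that by simp
  have inter: "{a} \<times> grp ns \<inter> grp ms \<times> {j} = {(a, j)}" "grp ms \<times> {j} \<inter> {a} \<times> grp ns = {(a, j)}"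
    if "a \<in> grp ms" "j \<in> grp ns" for a j
    using that by auto
  have UV: "meq ?I (mmult ?I (U i a b) (V i j)) (Rm {(a, j)} (?A i b) ?E)"
    if "i \<in> grp ns" "j \<in> grp ns" "a \<in> grp ms" "b \<in> grp ms" for i j a b
  proof -
    have "meq ?I (mmult ?I (U i a b) (V i j)) (Rm ({a} \<times> grp ns \<inter> grp ms \<times> {j}) (?A i b) ?E)"
      by (rule meq_mmult_Rm[OF finI _ _ E(1) _ _ orth[OF that(1,4)] UR'[OF that(1,3,4)] VR'[OF that(1,2,4)]])
        (use fX fY that in auto)
    then show ?thesis using inter[OF that(3,2)] by simp
  qed
  have VU: "meq ?I (mmult ?I (V i j) (U i a b)) (Rm {(a, j)} (?A i b) ?E)"
    if "i \<in> grp ns" "j \<in> grp ns" "a \<in> grp ms" "b \<in> grp ms" for i j a b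
  proof -
    have "meq ?I (mmult ?I (V i j) (U i a b)) (Rm (grp ms \<times> {j} \<inter> {a} \<times> grp ns) (?A i b) ?E)"
      by (rule meq_mmult_Rm[OF finI _ _ E(1) _ _ orth[OF that(1,4)] VR'[OF that(1,2,4)] UR'[OF that(1,3,4)]])
        (use fX fY that in auto)
    then show ?thesis using inter[OF that(3,2)] by simp
  qed
  have WR': "meq ?I (Wm ns ms Q i a j b) (Rm {(a, j)} (?A i b) ?E)"
    if "i \<in> grp ns" "j \<in> grp ns" "a \<in> grp ms" "b \<in> grp ms" for i j a b
    by (rule WR[OF pns pms uQ that])
  have comm: "meq ?I (mmult ?I (U i a b) (V i j)) (mmult ?I (V i j) (U i a b))"
    if "i \<in> grp ns" "j \<in> grp ns" "a \<in> grp ms" "b \<in> grp ms" for i j a b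
    using UV[OF that] VU[OF that] unfolding meq_def by simp
  have Wprod: "meq ?I (Wm ns ms Q i a j b) (mmult ?I (U i a b) (V i j))"
    if "i \<in> grp ns" "j \<in> grp ns" "a \<in> grp ms" "b \<in> grp ms" for i j a b
    using UV[OF that] WR'[OF that] unfolding meq_def by simp
  have wr: "wreath_rep ns ms U V"
    unfolding wreath_rep_def Let_def magic_def
    by (simp add: Uproj Vproj Urow Ucol Vrow Vcol Udep Vdep comm)
  have Ueq: "meq ?I (U i a b) (\<lambda>p q. \<Sum>j\<in>grp ns. Wm ns ms Q i a j b p q)" for i a b
    unfolding U_def meq_def by simp
  show ?thesis
    apply (intro conjI exI[of _ U] exI[of _ V])
    using part1 wr Ueq VW Wprod by simp_all
qed


end
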